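(* Let $G$ be a finite GVZ-group. Then $U(G)=K(G)$. In particular, this holds if $G$ has nilpotence class $2$.
   Context: For $\chi\in\mathrm{Irr}(G)$, the center of $\chi$ is $Z(\chi)=\{g\in G : |\chi(g)|=\chi(1)\}$. $G$ is a GVZ-group if every $\chi\in\mathrm{Irr}(G)$ vanishes on $G\setminus Z(\chi)$. For a nonabelian group $G$, let $\mathcal{X}=\{\chi\in\mathrm{Irr}(G) : Z(\chi)>Z(G)\}$ (strict containment) and define $K(G)=\bigcap_{\chi\in\mathcal{X}}\ker(\chi)$; if $G$ is abelian, set $K(G)=G$. For a normal subgroup $H$ of $G$, $\mathrm{Irr}(G\mid H)$ is the set of $\chi\in\mathrm{Irr}(G)$ with $H\not\le\ker(\chi)$, and $V(G\mid H)$ is the subgroup generated by all $g\in G$ with $\chi(g)\ne0$ for some $\chi\in\mathrm{Irr}(G\mid H)$ (with $V(G\mid 1)=1$). For a normal subgroup $N$, $U(G\mid N)$ is the product of all normal subgroups $H$ of $G$ with $V(G\mid H)\le N$, and $U(G)=U(G\mid Z(G))$. *)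

theory Defs
  imports "HOL-Algebra.Algebra" "Jordan_Normal_Form.Matrix"
begin

definition is_rep :: "('a, 'b) monoid_scheme \<Rightarrow> nat \<Rightarrow> ('a \<Rightarrow> complex mat) \<Rightarrow> bool" where
  "is_rep G n \<rho> \<longleftrightarrow>
     (\<forall>g \<in> carrier G. \<rho> g \<in> carrier_mat n n) \<and>
     \<rho> \<one>\<^bsub>G\<^esub> = 1\<^sub>m n \<and>
     (\<forall>g \<in> carrier G. \<forall>h \<in> carrier G. \<rho> (g \<otimes>\<^bsub>G\<^esub> h) = \<rho> g * \<rho> h)"

definition invariant_subspace :: "('a, 'b) monoid_scheme \<Rightarrow> nat \<Rightarrow> ('a \<Rightarrow> complex mat) \<Rightarrow> complex vec set \<Rightarrow> bool" where
  "invariant_subspace G n \<rho> W \<longleftrightarrow>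
     W \<subseteq> carrier_vec n \<and> 0\<^sub>v n \<in> W \<and>
     (\<forall>v \<in> W. \<forall>w \<in> W. v + w \<in> W) \<and>
     (\<forall>c. \<forall>v \<in> W. c \<cdot>\<^sub>v v \<in> W) \<and>
     (\<forall>g \<in> carrier G. \<forall>v \<in> W. \<rho> g *\<^sub>v v \<in> W)"

definition irreducible_rep :: "('a, 'b) monoid_scheme \<Rightarrow> nat \<Rightarrow> ('a \<Rightarrow> complex mat) \<Rightarrow> bool" where
  "irreducible_rep G n \<rho> \<longleftrightarrow> is_rep G n \<rho> \<and> n > 0 \<and>
     (\<forall>W. invariant_subspace G n \<rho> W \<longrightarrow> W = {0\<^sub>v n} \<or> W = carrier_vec n)"

definition mat_trace :: "complex mat \<Rightarrow> complex" where
  "mat_trace A = (\<Sum>i<dim_row A. A $$ (i, i))"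

definition Irr :: "('a, 'b) monoid_scheme \<Rightarrow> ('a \<Rightarrow> complex) set" where
  "Irr G = {\<chi>. \<exists>n \<rho>. irreducible_rep G n \<rho> \<and>
              \<chi> = (\<lambda>g. if g \<in> carrier G then mat_trace (\<rho> g) else 0)}"

definition char_center :: "('a, 'b) monoid_scheme \<Rightarrow> ('a \<Rightarrow> complex) \<Rightarrow> 'a set" where
  "char_center G \<chi> = {g \<in> carrier G. cmod (\<chi> g) = cmod (\<chi> \<one>\<^bsub>G\<^esub>)}"

definition char_ker :: "('a, 'b) monoid_scheme \<Rightarrow> ('a \<Rightarrow> complex) \<Rightarrow> 'a set" where
  "char_ker G \<chi> = {g \<in> carrier G. \<chi> g = \<chi> \<one>\<^bsub>G\<^esub>}"

definition group_center :: "('a, 'b) monoid_scheme \<Rightarrow> 'a set" where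
  "group_center G = {z \<in> carrier G. \<forall>g \<in> carrier G. z \<otimes>\<^bsub>G\<^esub> g = g \<otimes>\<^bsub>G\<^esub> z}"

definition GVZ :: "('a, 'b) monoid_scheme \<Rightarrow> bool" where
  "GVZ G \<longleftrightarrow> (\<forall>\<chi> \<in> Irr G. \<forall>g \<in> carrier G - char_center G \<chi>. \<chi> g = 0)"

definition K_grp :: "('a, 'b) monoid_scheme \<Rightarrow> 'a set" where
  "K_grp G = (if comm_group G then carrier G
     else carrier G \<inter> (\<Inter>{char_ker G \<chi> | \<chi>. \<chi> \<in> Irr G \<and> group_center G \<subset> char_center G \<chi>}))"

definition Irr_rel :: "('a, 'b) monoid_scheme \<Rightarrow> 'a set \<Rightarrow> ('a \<Rightarrow> complex) set" where
  "Irr_rel G H = {\<chi> \<in> Irr G. \<not> H \<subseteq> char_ker G \<chi>}"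

(* V(G|H): subgroup generated by elements on which some chi in Irr(G|H) is nonzero;
   for H = 1 the generating set is empty, so V(G|1) = 1 *)
definition V_rel :: "('a, 'b) monoid_scheme \<Rightarrow> 'a set \<Rightarrow> 'a set" where
  "V_rel G H = generate G {g \<in> carrier G. \<exists>\<chi> \<in> Irr_rel G H. \<chi> g \<noteq> 0}"

(* U(G|N): product of all normal subgroups H with V(G|H) <= N,
   i.e. the subgroup generated by their union *)
definition U_rel :: "('a, 'b) monoid_scheme \<Rightarrow> 'a set \<Rightarrow> 'a set" where
  "U_rel G N = generate G (\<Union>{H. H \<lhd> G \<and> V_rel G H \<subseteq> N})"

definition U_grp :: "('a, 'b) monoid_scheme \<Rightarrow> 'a set" where
  "U_grp G = U_rel G (group_center G)"

definition nilpotent_class2 :: "('a, 'b) monoid_scheme \<Rightarrow> bool" where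
  "nilpotent_class2 G \<longleftrightarrow> \<not> comm_group G \<and> derived G (carrier G) \<subseteq> group_center G"

end

theory Submission
  imports Defs "Jordan_Normal_Form.Jordan_Normal_Form_Existence" "Jordan_Normal_Form.Spectral_Radius"
begin


lemma jm_pow_one:
  fixes n_as :: "(nat \<times> complex) list"
  assumes "0 \<notin> fst ` set n_as" "m > 0"
    "jordan_matrix n_as ^\<^sub>m m = 1\<^sub>m (sum_list (map fst n_as))"
  shows "\<forall>(k,a)\<in>set n_as. k = 1 \<and> a ^ m = 1"
  using assms
proof (induction n_as)
  case Nil
  then show ?case by simp
next
  case (Cons ka rest)
  obtain k a where ka: "ka = (k,a)" by force
  let ?J = "jordan_block k a ^\<^sub>m m"
  let ?R = "jordan_matrix rest ^\<^sub>m m"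
  let ?N = "sum_list (map fst rest)"
  have k0: "k \<noteq> 0" using Cons.prems ka by auto
  have R: "?R \<in> carrier_mat ?N ?N" by simp
  have eq: "jordan_matrix (ka # rest) ^\<^sub>m m = four_block_mat ?J (0\<^sub>m k ?N) (0\<^sub>m ?N k) ?R"
    unfolding jordan_matrix_pow ka by (simp add: jordan_matrix_pow[symmetric] Let_def)
  have X: "four_block_mat ?J (0\<^sub>m k ?N) (0\<^sub>m ?N k) ?R = 1\<^sub>m (k + ?N)"
    using Cons.prems(3) eq ka by simp
  have e: "four_block_mat ?J (0\<^sub>m k ?N) (0\<^sub>m ?N k) ?R $$ (i,j) = 1\<^sub>m (k + ?N) $$ (i,j)" for i j
    using X by simp
  have a1: "a ^ m = 1"
    using e[of 0 0] k0 by (simp add: jordan_block_pow)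
  have k1: "k = 1"
  proof (rule ccontr)
    assume "k \<noteq> 1"
    with k0 have "1 < k" by simp
    then have "of_nat m * a ^ (m - 1) = 0"
      using e[of 0 1] by (simp add: jordan_block_pow)
    then have "a = 0" using \<open>m > 0\<close> by simp
    then show False using a1 \<open>m > 0\<close> by (simp add: zero_power)
  qed
  have "?R = 1\<^sub>m ?N"
  proof (rule eq_matI)
    fix i j assume ij: "i < dim_row (1\<^sub>m ?N)" "j < dim_col (1\<^sub>m ?N)"
    then show "?R $$ (i,j) = 1\<^sub>m ?N $$ (i,j)"
      using e[of "k+i" "k+j"] \<open>m > 0\<close> by simp
  qed auto
  then have "\<forall>(k,a)\<in>set rest. k = 1 \<and> a ^ m = 1"
    using Cons.IH Cons.prems by auto
  then show ?case using ka k1 a1 by simp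
qed

lemma jm_diag:
  fixes n_as :: "(nat \<times> complex) list"
  assumes "\<forall>(k,a)\<in>set n_as. k = 1"
  shows "jordan_matrix n_as = mat (length n_as) (length n_as) (\<lambda>(i,j). if i = j then snd (n_as ! i) else 0)"
  using assms
proof (induction n_as)
  case Nil
  then show ?case by (auto simp: jordan_matrix_def)
next
  case (Cons ka rest)
  obtain k a where ka: "ka = (k,a)" by force
  have k1: "k = 1" using Cons.prems ka by auto
  have s: "sum_list (map fst rest) = length rest"
    using Cons.prems by (induction rest) auto
  have IH: "jordan_matrix rest = mat (length rest) (length rest) (\<lambda>(i,j). if i = j then snd (rest ! i) else 0)"
    using Cons by auto
  show ?case
    unfolding ka jordan_matrix_Cons k1 s
    by (rule eq_matI) (auto simp: IH nth_Cons')
qed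

lemma mat_trace_comm:
  fixes A B :: "complex mat"
  assumes "A \<in> carrier_mat n m" "B \<in> carrier_mat m n"
  shows "mat_trace (A * B) = mat_trace (B * A)"
proof -
  have "mat_trace (A * B) = (\<Sum>i<n. \<Sum>k<m. A $$ (i,k) * B $$ (k,i))"
    using assms unfolding mat_trace_def
    by (auto simp: scalar_prod_def sum.atLeast0_lessThan_Suc lessThan_atLeast0 intro!: sum.cong)
  also have "\<dots> = (\<Sum>k<m. \<Sum>i<n. B $$ (k,i) * A $$ (i,k))"
    by (subst sum.swap) (simp add: mult.commute)
  also have "\<dots> = mat_trace (B * A)"
    using assms unfolding mat_trace_def
    by (auto simp: scalar_prod_def lessThan_atLeast0 intro!: sum.cong)
  finally show ?thesis .
qed

lemma root_unity_norm:
  fixes a :: complex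
  assumes "a ^ m = 1" "m > 0"
  shows "cmod a = 1"
proof -
  have "cmod a ^ m = 1" using assms by (metis norm_one norm_power)
  then show ?thesis using power_eq_imp_eq_base[of "cmod a" m 1] assms(2) by simp
qed

lemma re_one_norm_one:
  fixes a :: complex
  assumes "cmod a = 1" "Re a = 1"
  shows "a = 1"
proof -
  have "(Re a)^2 + (Im a)^2 = 1" using assms(1) unfolding cmod_def by simp
  then have "Im a = 0" using assms(2) by simp
  then show ?thesis using assms(2) by (simp add: complex_eq_iff)
qed

lemma sum_unit_eq:
  fixes a :: "nat \<Rightarrow> complex"
  assumes "\<And>i. i < n \<Longrightarrow> cmod (a i) = 1" "(\<Sum>i<n. a i) = of_nat n"
  shows "\<And>i. i < n \<Longrightarrow> a i = 1"
proof -
  have le: "Re (a i) \<le> 1" if "i < n" for i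
    using assms(1)[OF that] complex_Re_le_cmod[of "a i"] by simp
  have "(\<Sum>i<n. Re (a i)) = real n"
    using arg_cong[OF assms(2), of Re] by (simp add: Re_sum)
  then have "(\<Sum>i<n. 1 - Re (a i)) = 0" by (simp add: sum_subtractf)
  then have z: "\<forall>i\<in>{..<n}. 1 - Re (a i) = 0"
    by (subst sum_nonneg_eq_0_iff[symmetric]) (auto simp: le)
  fix i assume "i < n"
  then show "a i = 1" using z assms(1) re_one_norm_one by auto
qed

lemma finite_order_trace:
  fixes A :: "complex mat"
  assumes A: "A \<in> carrier_mat n n" and m: "m > 0" and Am: "A ^\<^sub>m m = 1\<^sub>m n"
    and tr: "mat_trace A = of_nat n"
  shows "A = 1\<^sub>m n"
proof -
  obtain as where "char_poly A = (\<Prod> a \<leftarrow> as. [:- a, 1:])"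
    using char_poly_factorized[OF A] by auto
  from jordan_nf_exists[OF A this] obtain n_as where jnf: "jordan_nf A n_as" by auto
  let ?J = "jordan_matrix n_as"
  from jnf have z: "0 \<notin> fst ` set n_as" and "similar_mat A ?J" unfolding jordan_nf_def by auto
  then obtain P Q where wit: "similar_mat_wit A ?J P Q" unfolding similar_mat_def by auto
  have dA: "dim_row A = n" using A by auto
  from wit have J: "?J \<in> carrier_mat n n" and P: "P \<in> carrier_mat n n" and Q: "Q \<in> carrier_mat n n"
    and PQ: "P * Q = 1\<^sub>m n" and QP: "Q * P = 1\<^sub>m n" and AJ: "A = P * ?J * Q"
    unfolding similar_mat_wit_def Let_def dA by auto
  have N: "sum_list (map fst n_as) = n" using J by (metis carrier_matD(1) jordan_matrix_dim(1))
  have "?J ^\<^sub>m m = Q * A ^\<^sub>m m * P"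
    by (rule similar_mat_wit_pow_id[OF similar_mat_wit_sym[OF wit]])
  also have "\<dots> = 1\<^sub>m n" using Am Q P QP by simp
  finally have Jm: "?J ^\<^sub>m m = 1\<^sub>m (sum_list (map fst n_as))" using N by simp
  have all: "\<forall>(k,a)\<in>set n_as. k = 1 \<and> a ^ m = 1" by (rule jm_pow_one[OF z m Jm])
  then have k1: "\<forall>(k,a)\<in>set n_as. k = 1" by auto
  have len: "length n_as = n"
  proof -
    have "sum_list (map fst n_as) = length n_as" using k1 by (induction n_as) auto
    then show ?thesis using N by simp
  qed
  have Jd: "?J = mat n n (\<lambda>(i,j). if i = j then snd (n_as ! i) else 0)"
    using jm_diag[OF k1] len by simp
  have un: "cmod (snd (n_as ! i)) = 1" if "i < n" for i
  proof -
    have "n_as ! i \<in> set n_as" using that len by simp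
    then have "snd (n_as ! i) ^ m = 1" using all by auto
    then show ?thesis using root_unity_norm m by blast
  qed
  have "mat_trace A = mat_trace ((P * ?J) * Q)" using AJ by simp
  also have "\<dots> = mat_trace (Q * (P * ?J))"
    by (rule mat_trace_comm[of _ n n], insert P J Q, auto)
  also have "Q * (P * ?J) = (Q * P) * ?J" using P J Q by (simp add: assoc_mult_mat)
  also have "\<dots> = ?J" using QP J by (simp add: left_mult_one_mat[OF J])
  finally have "mat_trace ?J = of_nat n" using tr by simp
  then have "(\<Sum>i<n. snd (n_as ! i)) = of_nat n"
    unfolding Jd mat_trace_def by simp
  from sum_unit_eq[OF un this] have one: "\<And>i. i < n \<Longrightarrow> snd (n_as ! i) = 1" by auto
  have "?J = 1\<^sub>m n" unfolding Jd by (rule eq_matI) (auto simp: one)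
  then show ?thesis using AJ PQ P Q by simp
qed

lemma schur_eig:
  fixes A :: "complex mat"
  assumes irr: "irreducible_rep G n \<rho>" and A: "A \<in> carrier_mat n n"
    and comm: "\<And>h. h \<in> carrier G \<Longrightarrow> \<rho> h * A = A * \<rho> h"
  shows "\<exists>c. A = c \<cdot>\<^sub>m 1\<^sub>m n"
proof -
  have rep: "is_rep G n \<rho>" and n: "n > 0"
    and inv: "\<And>W. invariant_subspace G n \<rho> W \<Longrightarrow> W = {0\<^sub>v n} \<or> W = carrier_vec n"
    using irr unfolding irreducible_rep_def by auto
  have rc: "\<And>h. h \<in> carrier G \<Longrightarrow> \<rho> h \<in> carrier_mat n n" using rep unfolding is_rep_def by auto
  obtain c where "c \<in> spectrum A" using spectrum_non_empty[OF A n] by auto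
  then obtain v where ev: "eigenvector A v c" unfolding spectrum_def eigenvalue_def by auto
  have v: "v \<in> carrier_vec n" "v \<noteq> 0\<^sub>v n" "A *\<^sub>v v = c \<cdot>\<^sub>v v"
    using ev A unfolding eigenvector_def by auto
  define W where "W = {w \<in> carrier_vec n. A *\<^sub>v w = c \<cdot>\<^sub>v w}"
  have "invariant_subspace G n \<rho> W"
    unfolding invariant_subspace_def
  proof (intro conjI ballI allI)
    show "W \<subseteq> carrier_vec n" unfolding W_def by auto
    show "0\<^sub>v n \<in> W" unfolding W_def using A by auto
  next
    fix x y assume "x \<in> W" "y \<in> W"
    then show "x + y \<in> W" unfolding W_def using A
      by (auto simp: mult_add_distrib_mat_vec smult_add_distrib_vec)
  next
    fix d x assume "x \<in> W"
    then show "d \<cdot>\<^sub>v x \<in> W" unfolding W_def using A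
      by (auto simp: mult_mat_vec smult_smult_assoc mult.commute)
  next
    fix h x assume h: "h \<in> carrier G" and "x \<in> W"
    then have x: "x \<in> carrier_vec n" "A *\<^sub>v x = c \<cdot>\<^sub>v x" unfolding W_def by auto
    have "A *\<^sub>v (\<rho> h *\<^sub>v x) = (A * \<rho> h) *\<^sub>v x" using A rc[OF h] x by simp
    also have "\<dots> = (\<rho> h * A) *\<^sub>v x" using comm[OF h] by simp
    also have "\<dots> = \<rho> h *\<^sub>v (c \<cdot>\<^sub>v x)" using A rc[OF h] x by simp
    also have "\<dots> = c \<cdot>\<^sub>v (\<rho> h *\<^sub>v x)" using rc[OF h] x by (simp add: mult_mat_vec)
    finally show "\<rho> h *\<^sub>v x \<in> W" unfolding W_def using rc[OF h] x by auto
  qed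
  moreover have "v \<in> W" using v unfolding W_def by auto
  ultimately have W: "W = carrier_vec n" using inv v(2) by blast
  have "A = c \<cdot>\<^sub>m 1\<^sub>m n"
  proof (rule eq_matI)
    fix i j assume "i < dim_row (c \<cdot>\<^sub>m 1\<^sub>m n)" "j < dim_col (c \<cdot>\<^sub>m 1\<^sub>m n)"
    then have ij: "i < n" "j < n" by auto
    have "unit_vec n j \<in> W" using W ij by auto
    then have "A *\<^sub>v unit_vec n j = c \<cdot>\<^sub>v unit_vec n j" unfolding W_def by auto
    then have "(A *\<^sub>v unit_vec n j) $ i = (c \<cdot>\<^sub>v unit_vec n j) $ i" by simp
    then show "A $$ (i, j) = (c \<cdot>\<^sub>m 1\<^sub>m n) $$ (i, j)"
      using ij A by (auto simp: mult_mat_vec_def)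
  qed (use A in auto)
  then show ?thesis by blast
qed

lemma rep_carrier: "is_rep G n \<rho> \<Longrightarrow> g \<in> carrier G \<Longrightarrow> \<rho> g \<in> carrier_mat n n"
  unfolding is_rep_def by auto

lemma rep_mult: "is_rep G n \<rho> \<Longrightarrow> g \<in> carrier G \<Longrightarrow> h \<in> carrier G \<Longrightarrow> \<rho> (g \<otimes>\<^bsub>G\<^esub> h) = \<rho> g * \<rho> h"
  unfolding is_rep_def by auto

lemma rep_one: "is_rep G n \<rho> \<Longrightarrow> \<rho> \<one>\<^bsub>G\<^esub> = 1\<^sub>m n"
  unfolding is_rep_def by auto

lemma rep_pow:
  assumes "group G" "is_rep G n \<rho>" "g \<in> carrier G"
  shows "\<rho> (g [^]\<^bsub>G\<^esub> (k::nat)) = \<rho> g ^\<^sub>m k"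
proof (induction k)
  case 0
  then show ?case using assms rep_one[OF assms(2)] rep_carrier[OF assms(2,3)] by simp
next
  case (Suc k)
  interpret group G by fact
  have "\<rho> (g [^]\<^bsub>G\<^esub> Suc k) = \<rho> (g [^]\<^bsub>G\<^esub> k \<otimes>\<^bsub>G\<^esub> g)" by simp
  also have "\<dots> = \<rho> (g [^]\<^bsub>G\<^esub> k) * \<rho> g" using rep_mult[OF assms(2)] assms(3) by simp
  finally show ?case using Suc by simp
qed

lemma rep_order:
  assumes "group G" "finite (carrier G)" "is_rep G n \<rho>" "g \<in> carrier G"
  shows "\<rho> g ^\<^sub>m Coset.order G = 1\<^sub>m n" "Coset.order G > 0"
proof -
  interpret group G by fact
  show "Coset.order G > 0" using assms(2) order_gt_0_iff_finite by blast
  have "\<rho> g ^\<^sub>m Coset.order G = \<rho> (g [^]\<^bsub>G\<^esub> Coset.order G)" using rep_pow[OF assms(1,3,4)] by simp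
  also have "\<dots> = 1\<^sub>m n" using pow_order_eq_1[OF assms(4)] rep_one[OF assms(3)] by simp
  finally show "\<rho> g ^\<^sub>m Coset.order G = 1\<^sub>m n" .
qed

lemma smult_one_pow: "(c \<cdot>\<^sub>m 1\<^sub>m n) ^\<^sub>m k = (c ^ k) \<cdot>\<^sub>m (1\<^sub>m n :: complex mat)"
proof (induction k)
  case 0 then show ?case by (auto intro!: eq_matI)
next
  case (Suc k)
  have "(c \<cdot>\<^sub>m 1\<^sub>m n) ^\<^sub>m Suc k = ((c ^ k) \<cdot>\<^sub>m (1\<^sub>m n :: complex mat)) * (c \<cdot>\<^sub>m 1\<^sub>m n)"
    using Suc by simp
  also have "\<dots> = (c ^ k) \<cdot>\<^sub>m (c \<cdot>\<^sub>m (1\<^sub>m n * 1\<^sub>m n))"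
    using mult_smult_assoc_mat[of "1\<^sub>m n" n n "c \<cdot>\<^sub>m 1\<^sub>m n" n "c^k"]
      mult_smult_distrib[of "1\<^sub>m n" n n "1\<^sub>m n" n c] by simp
  also have "\<dots> = (c ^ Suc k) \<cdot>\<^sub>m (1\<^sub>m n :: complex mat)"
    by (auto intro!: eq_matI)
  finally show ?case .
qed

lemma mat_trace_smult: "A \<in> carrier_mat n n \<Longrightarrow> mat_trace (c \<cdot>\<^sub>m A) = c * mat_trace A"
  unfolding mat_trace_def by (auto simp: sum_distrib_left intro!: sum.cong)

lemma mat_trace_one: "mat_trace (1\<^sub>m n :: complex mat) = of_nat n"
  unfolding mat_trace_def by simp

lemma rep_schur:
  assumes "group G" "finite (carrier G)" "irreducible_rep G n \<rho>" "g \<in> carrier G"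
    "\<And>h. h \<in> carrier G \<Longrightarrow> \<rho> h * \<rho> g = \<rho> g * \<rho> h"
  shows "\<exists>c. \<rho> g = c \<cdot>\<^sub>m 1\<^sub>m n \<and> cmod c = 1"
proof -
  have rep: "is_rep G n \<rho>" and n: "n > 0" using assms(3) unfolding irreducible_rep_def by auto
  obtain c where c: "\<rho> g = c \<cdot>\<^sub>m 1\<^sub>m n"
    using schur_eig[OF assms(3) rep_carrier[OF rep assms(4)] assms(5)] by blast
  have "(c \<cdot>\<^sub>m 1\<^sub>m n) ^\<^sub>m Coset.order G = 1\<^sub>m n" using rep_order(1)[OF assms(1,2) rep assms(4)] c by simp
  then have "((c ^ Coset.order G) \<cdot>\<^sub>m (1\<^sub>m n :: complex mat)) $$ (0,0) = (1\<^sub>m n :: complex mat) $$ (0,0)"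
    by (simp add: smult_one_pow)
  then have "c ^ Coset.order G = 1" using n by simp
  then have "cmod c = 1" using root_unity_norm rep_order(2)[OF assms(1,2) rep assms(4)] by blast
  then show ?thesis using c by blast
qed

lemma rep_ker:
  assumes "group G" "finite (carrier G)" "is_rep G n \<rho>" "g \<in> carrier G"
    "mat_trace (\<rho> g) = of_nat n"
  shows "\<rho> g = 1\<^sub>m n"
  using finite_order_trace[OF rep_carrier[OF assms(3,4)] rep_order(2)[OF assms(1,2,3,4)]
      rep_order(1)[OF assms(1,2,3,4)] assms(5)] .



lemma center_subgroup:
  fixes G :: "('a, 'b) monoid_scheme" (structure)
  assumes "group G" shows "subgroup (group_center G) G"
proof -
  interpret group G by fact
  show ?thesis
  proof (rule subgroup.intro)
    show "group_center G \<subseteq> carrier G" unfolding group_center_def by auto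
  next
    fix x y assume "x \<in> group_center G" "y \<in> group_center G"
    then have xy: "x \<in> carrier G" "y \<in> carrier G" "\<And>g. g \<in> carrier G \<Longrightarrow> x \<otimes> g = g \<otimes> x"
       "\<And>g. g \<in> carrier G \<Longrightarrow> y \<otimes> g = g \<otimes> y" unfolding group_center_def by auto
    have c: "x \<otimes> y \<otimes> g = g \<otimes> (x \<otimes> y)" if g: "g \<in> carrier G" for g
    proof -
      have "x \<otimes> y \<otimes> g = x \<otimes> (y \<otimes> g)" using xy(1,2) g by (simp add: m_assoc)
      also have "\<dots> = x \<otimes> (g \<otimes> y)" using xy(4)[OF g] by (rule arg_cong)
      also have "\<dots> = (x \<otimes> g) \<otimes> y" using xy(1,2) g by (simp add: m_assoc)
      also have "\<dots> = (g \<otimes> x) \<otimes> y" using xy(3)[OF g] by (rule arg_cong)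
      also have "\<dots> = g \<otimes> (x \<otimes> y)" using xy(1,2) g by (simp add: m_assoc)
      finally show ?thesis .
    qed
    show "x \<otimes> y \<in> group_center G" unfolding group_center_def using xy(1,2) c by (blast intro: m_closed)
  next
    show "\<one> \<in> group_center G" unfolding group_center_def by auto
  next
    fix x assume x: "x \<in> group_center G"
    then have xc: "x \<in> carrier G" and xc2: "\<And>g. g \<in> carrier G \<Longrightarrow> x \<otimes> g = g \<otimes> x"
      unfolding group_center_def by auto
    have c: "inv x \<otimes> g = g \<otimes> inv x" if g: "g \<in> carrier G" for g
    proof -
      have "inv x \<otimes> g = inv x \<otimes> (g \<otimes> x) \<otimes> inv x" using xc g by (simp add: m_assoc)
      also have "\<dots> = inv x \<otimes> (x \<otimes> g) \<otimes> inv x" using xc2[OF g] by (rule sym[THEN arg_cong])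
      also have "\<dots> = g \<otimes> inv x" using xc g by (simp add: m_assoc[symmetric])
      finally show ?thesis .
    qed
    show "inv x \<in> group_center G" unfolding group_center_def using xc c by (blast intro: inv_closed)
  qed
qed

lemma normal_Inter_carrier:
  fixes G :: "('a, 'b) monoid_scheme" (structure)
  assumes "group G" "\<And>H. H \<in> F \<Longrightarrow> H \<lhd> G"
  shows "carrier G \<inter> \<Inter>F \<lhd> G"
proof -
  interpret group G by fact
  have sg: "\<And>H. H \<in> F \<Longrightarrow> subgroup H G" using assms(2) normal_imp_subgroup by blast
  have "subgroup (carrier G \<inter> \<Inter>F) G"
  proof (rule subgroup.intro)
    fix x y assume "x \<in> carrier G \<inter> \<Inter>F" "y \<in> carrier G \<inter> \<Inter>F"
    then show "x \<otimes> y \<in> carrier G \<inter> \<Inter>F" using subgroup.m_closed[OF sg] by blast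
  next
    show "\<one> \<in> carrier G \<inter> \<Inter>F" using subgroup.one_closed[OF sg] by blast
  next
    fix x assume "x \<in> carrier G \<inter> \<Inter>F"
    then show "inv x \<in> carrier G \<inter> \<Inter>F" using subgroup.m_inv_closed[OF sg] by blast
  qed auto
  moreover have "\<forall>x\<in>carrier G. \<forall>h\<in>carrier G \<inter> \<Inter>F. x \<otimes> h \<otimes> inv x \<in> carrier G \<inter> \<Inter>F"
  proof (intro ballI)
    fix x h assume x: "x \<in> carrier G" and h: "h \<in> carrier G \<inter> \<Inter>F"
    have "x \<otimes> h \<otimes> inv x \<in> H" if "H \<in> F" for H
      using assms(2)[OF that] normal_inv_iff x h that by blast
    then show "x \<otimes> h \<otimes> inv x \<in> carrier G \<inter> \<Inter>F" using x h by auto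
  qed
  ultimately show ?thesis using normal_inv_iff by blast
qed

definition chi_of :: "('a, 'b) monoid_scheme \<Rightarrow> ('a \<Rightarrow> complex mat) \<Rightarrow> 'a \<Rightarrow> complex" where
  "chi_of G \<rho> = (\<lambda>g. if g \<in> carrier G then mat_trace (\<rho> g) else 0)"

lemma Irr_E:
  assumes "\<chi> \<in> Irr G"
  obtains n \<rho> where "irreducible_rep G n \<rho>" "\<chi> = chi_of G \<rho>"
  using assms unfolding Irr_def chi_of_def by auto

lemma chi_one:
  fixes G :: "('a, 'b) monoid_scheme" (structure)
  assumes "group G" "irreducible_rep G n \<rho>"
  shows "chi_of G \<rho> \<one>\<^bsub>G\<^esub> = of_nat n"
proof -
  interpret group G by fact
  have rep: "is_rep G n \<rho>" using assms(2) unfolding irreducible_rep_def by auto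
  show ?thesis unfolding chi_of_def using rep_one[OF rep] mat_trace_one by simp
qed

lemma center_in_char_center:
  fixes G :: "('a, 'b) monoid_scheme" (structure)
  assumes "group G" "finite (carrier G)" "irreducible_rep G n \<rho>" "z \<in> group_center G"
  shows "z \<in> char_center G (chi_of G \<rho>)"
proof -
  interpret group G by fact
  have rep: "is_rep G n \<rho>" using assms(3) unfolding irreducible_rep_def by auto
  have z: "z \<in> carrier G" and zc: "\<And>g. g \<in> carrier G \<Longrightarrow> z \<otimes> g = g \<otimes> z"
    using assms(4) unfolding group_center_def by auto
  have "\<And>h. h \<in> carrier G \<Longrightarrow> \<rho> h * \<rho> z = \<rho> z * \<rho> h"
  proof -
    fix h assume h: "h \<in> carrier G"
    have "\<rho> h * \<rho> z = \<rho> (h \<otimes> z)" using rep_mult[OF rep h z] by simp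
    also have "\<dots> = \<rho> (z \<otimes> h)" using zc[OF h] by simp
    also have "\<dots> = \<rho> z * \<rho> h" using rep_mult[OF rep z h] by simp
    finally show "\<rho> h * \<rho> z = \<rho> z * \<rho> h" .
  qed
  from rep_schur[OF assms(1,2,3) z this] obtain c where c: "\<rho> z = c \<cdot>\<^sub>m 1\<^sub>m n" "cmod c = 1" by blast
  have "chi_of G \<rho> z = c * of_nat n" unfolding chi_of_def using z c
    by (simp add: mat_trace_smult[of _ n] mat_trace_one)
  then have "cmod (chi_of G \<rho> z) = cmod (chi_of G \<rho> \<one>)" using c(2) chi_one[OF assms(1,3)]
    by (simp add: norm_mult)
  then show ?thesis unfolding char_center_def using z by auto
qed

lemma ker_eq:
  fixes G :: "('a, 'b) monoid_scheme" (structure)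
  assumes "group G" "finite (carrier G)" "irreducible_rep G n \<rho>"
  shows "char_ker G (chi_of G \<rho>) = {g \<in> carrier G. \<rho> g = 1\<^sub>m n}"
proof -
  interpret group G by fact
  have rep: "is_rep G n \<rho>" using assms(3) unfolding irreducible_rep_def by auto
  have rc: "\<And>g. g \<in> carrier G \<Longrightarrow> \<rho> g \<in> carrier_mat n n" using rep_carrier[OF rep] .
  show ?thesis
  proof (rule equalityI; rule subsetI)
    fix g assume "g \<in> char_ker G (chi_of G \<rho>)"
    then have g: "g \<in> carrier G" and t: "mat_trace (\<rho> g) = of_nat n"
      using chi_one[OF assms(1,3)] unfolding char_ker_def by (auto simp: chi_of_def)
    have "\<rho> g = 1\<^sub>m n" by (rule rep_ker[OF assms(1,2) rep g t])
    then show "g \<in> {g \<in> carrier G. \<rho> g = 1\<^sub>m n}" using g by blast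
  next
    fix g assume "g \<in> {g \<in> carrier G. \<rho> g = 1\<^sub>m n}"
    then have g: "g \<in> carrier G" and t: "\<rho> g = 1\<^sub>m n" by auto
    have "chi_of G \<rho> g = of_nat n" unfolding chi_of_def using g t mat_trace_one by simp
    then show "g \<in> char_ker G (chi_of G \<rho>)"
      using chi_one[OF assms(1,3)] g unfolding char_ker_def by simp
  qed
qed

lemma ker_normal:
  fixes G :: "('a, 'b) monoid_scheme" (structure)
  assumes "group G" "is_rep G n \<rho>"
  shows "{g \<in> carrier G. \<rho> g = 1\<^sub>m n} \<lhd> G"
proof -
  interpret group G by fact
  note rc = rep_carrier[OF assms(2)] and rm = rep_mult[OF assms(2)] and r1 = rep_one[OF assms(2)]
  have inv1: "\<rho> (inv g) = 1\<^sub>m n" if "g \<in> carrier G" "\<rho> g = 1\<^sub>m n" for g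
  proof -
    have "\<rho> (inv g) * \<rho> g = 1\<^sub>m n" using rm[of "inv g" g] that r1 by simp
    then show ?thesis using that rc[of "inv g"] by simp
  qed
  have sg: "subgroup {g \<in> carrier G. \<rho> g = 1\<^sub>m n} G"
  proof (rule subgroup.intro)
    fix x y assume "x \<in> {g \<in> carrier G. \<rho> g = 1\<^sub>m n}" "y \<in> {g \<in> carrier G. \<rho> g = 1\<^sub>m n}"
    then show "x \<otimes> y \<in> {g \<in> carrier G. \<rho> g = 1\<^sub>m n}" using rm by simp
  qed (use r1 inv1 in auto)
  have "x \<otimes> h \<otimes> inv x \<in> {g \<in> carrier G. \<rho> g = 1\<^sub>m n}"
    if "x \<in> carrier G" "h \<in> {g \<in> carrier G. \<rho> g = 1\<^sub>m n}" for x h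
  proof -
    have "\<rho> (x \<otimes> h \<otimes> inv x) = \<rho> x * \<rho> h * \<rho> (inv x)" using that rm by simp
    also have "\<dots> = \<rho> x * \<rho> (inv x)" using that rc[of x] by simp
    also have "\<dots> = 1\<^sub>m n" using rm[of x "inv x"] that r1 by simp
    finally show ?thesis using that by simp
  qed
  then show ?thesis using sg normal_inv_iff by blast
qed

lemma central_scalar:
  fixes G :: "('a, 'b) monoid_scheme" (structure)
  assumes "group G" "finite (carrier G)" "irreducible_rep G n \<rho>" "z \<in> carrier G"
    "\<And>g. g \<in> carrier G \<Longrightarrow> z \<otimes> g = g \<otimes> z"
  shows "\<exists>c. \<rho> z = c \<cdot>\<^sub>m 1\<^sub>m n \<and> cmod c = 1"
proof -
  interpret group G by fact
  have rep: "is_rep G n \<rho>" using assms(3) unfolding irreducible_rep_def by auto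
  have "\<rho> h * \<rho> z = \<rho> z * \<rho> h" if h: "h \<in> carrier G" for h
  proof -
    have "\<rho> h * \<rho> z = \<rho> (h \<otimes> z)" using rep_mult[OF rep h assms(4)] by simp
    also have "\<dots> = \<rho> (z \<otimes> h)" using assms(5)[OF h] by simp
    also have "\<dots> = \<rho> z * \<rho> h" using rep_mult[OF rep assms(4) h] by simp
    finally show ?thesis .
  qed
  then show ?thesis using rep_schur[OF assms(1,2,3,4)] by blast
qed

lemma class2_GVZ:
  fixes G :: "('a, 'b) monoid_scheme" (structure)
  assumes "group G" "finite (carrier G)" "nilpotent_class2 G"
  shows "GVZ G"
proof -
  interpret group G by fact
  have dz: "derived G (carrier G) \<subseteq> group_center G" using assms(3) unfolding nilpotent_class2_def by auto
  show ?thesis unfolding GVZ_def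
  proof (intro ballI)
    fix \<chi> g assume chi: "\<chi> \<in> Irr G" and gg: "g \<in> carrier G - char_center G \<chi>"
    obtain n \<rho> where irr: "irreducible_rep G n \<rho>" and chid: "\<chi> = chi_of G \<rho>" using Irr_E[OF chi] by blast
    have rep: "is_rep G n \<rho>" and npos: "n > 0" using irr unfolding irreducible_rep_def by auto
    note rc = rep_carrier[OF rep] and rm = rep_mult[OF rep] and r1 = rep_one[OF rep]
    have g: "g \<in> carrier G" using gg by auto
    show "\<chi> g = 0"
    proof (rule ccontr)
      assume nz: "\<chi> g \<noteq> 0"
      have tg: "\<chi> g = mat_trace (\<rho> g)" unfolding chid chi_of_def using g by simp
      have comm: "\<rho> h * \<rho> g = \<rho> g * \<rho> h" if h: "h \<in> carrier G" for h
      proof -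
        define c where "c = h \<otimes> g \<otimes> inv h \<otimes> inv g"
        have cc: "c \<in> carrier G" unfolding c_def using h g by simp
        have "c \<in> derived G (carrier G)" unfolding derived_def c_def
          by (rule generate.incl) (use h g in blast)
        then have cz: "c \<in> group_center G" using dz by auto
        then obtain \<mu> where mu: "\<rho> c = \<mu> \<cdot>\<^sub>m 1\<^sub>m n"
          using central_scalar[OF assms(1,2) irr cc] unfolding group_center_def by blast
        have e1: "h \<otimes> g \<otimes> inv h = c \<otimes> g" unfolding c_def using h g by (simp add: m_assoc)
        have "\<rho> (h \<otimes> g \<otimes> inv h) = \<rho> c * \<rho> g" using e1 rm cc g by simp
        also have "\<dots> = \<mu> \<cdot>\<^sub>m \<rho> g" unfolding mu
          using mult_smult_assoc_mat[of "1\<^sub>m n" n n "\<rho> g" n \<mu>] rc[OF g] by simp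
        finally have r1e: "\<rho> (h \<otimes> g \<otimes> inv h) = \<mu> \<cdot>\<^sub>m \<rho> g" .
        have "mat_trace (\<rho> (h \<otimes> g \<otimes> inv h)) = mat_trace ((\<rho> h * \<rho> g) * \<rho> (inv h))"
          using rm h g by simp
        also have "\<dots> = mat_trace (\<rho> (inv h) * (\<rho> h * \<rho> g))"
          by (rule mat_trace_comm[of _ n n]) (use rc h g in \<open>auto intro!: mult_carrier_mat\<close>)
        also have "\<rho> (inv h) * (\<rho> h * \<rho> g) = (\<rho> (inv h) * \<rho> h) * \<rho> g"
          using rc h g by (simp add: assoc_mult_mat[of _ n n _ n _ n])
        also have "\<rho> (inv h) * \<rho> h = 1\<^sub>m n" using rm[of "inv h" h] h r1 by simp
        finally have "mat_trace (\<rho> (h \<otimes> g \<otimes> inv h)) = mat_trace (\<rho> g)" using rc[OF g] by simp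
        then have "\<mu> * mat_trace (\<rho> g) = mat_trace (\<rho> g)" using r1e mat_trace_smult[OF rc[OF g]] by simp
        then have mu1: "\<mu> = 1" using nz tg by simp
        have aux: "inv g \<otimes> (g \<otimes> h) = h" using h g by (simp add: m_assoc[symmetric])
        have e2: "h \<otimes> g = c \<otimes> (g \<otimes> h)" unfolding c_def using h g aux by (simp add: m_assoc)
        have "\<rho> h * \<rho> g = \<rho> (h \<otimes> g)" using rm[OF h g] by simp
        also have "\<dots> = \<rho> (c \<otimes> (g \<otimes> h))" using e2 by simp
        also have "\<dots> = \<rho> c * (\<rho> g * \<rho> h)" using rm cc h g by simp
        also have "\<dots> = \<rho> g * \<rho> h"
        proof -
          have o: "(1::complex) \<cdot>\<^sub>m 1\<^sub>m n = 1\<^sub>m n" by (auto intro!: eq_matI)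
          have "\<rho> g * \<rho> h \<in> carrier_mat n n" using rc h g by (auto intro!: mult_carrier_mat)
          then show ?thesis using mu mu1 o by (simp add: left_mult_one_mat)
        qed
        finally show ?thesis .
      qed
      obtain lam where lam: "\<rho> g = lam \<cdot>\<^sub>m 1\<^sub>m n" "cmod lam = 1"
        using rep_schur[OF assms(1,2) irr g comm] by blast
      have "\<chi> g = lam * of_nat n" unfolding tg lam(1) by (simp add: mat_trace_smult[of _ n] mat_trace_one)
      then have "cmod (\<chi> g) = cmod (\<chi> \<one>)" using lam(2) chi_one[OF assms(1) irr] chid by (simp add: norm_mult)
      then have "g \<in> char_center G \<chi>" unfolding char_center_def using g by simp
      then show False using gg by simp
    qed
  qed
qed

lemma gvz_main:
  fixes G :: "('a, 'b) monoid_scheme" (structure)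
  assumes grp: "group G" and fin: "finite (carrier G)" and gvz: "GVZ G"
  shows "U_grp G = K_grp G"
proof -
  interpret group G by fact
  have Zsg: "subgroup (group_center G) G" by (rule center_subgroup[OF grp])
  have Vc: "V_rel G H \<subseteq> carrier G" for H unfolding V_rel_def by (rule generate_incl) auto
  show ?thesis
  proof (cases "comm_group G")
    case True
    interpret C: comm_group G by (rule True)
    have Zc: "group_center G = carrier G"
      using C.m_comm unfolding group_center_def by auto
    have un: "\<Union>{H. H \<lhd> G \<and> V_rel G H \<subseteq> group_center G} = carrier G"
    proof (rule equalityI)
      show "\<Union>{H. H \<lhd> G \<and> V_rel G H \<subseteq> group_center G} \<subseteq> carrier G"
        using normal_imp_subgroup subgroup.subset by blast
      show "carrier G \<subseteq> \<Union>{H. H \<lhd> G \<and> V_rel G H \<subseteq> group_center G}"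
        using normal_self Vc Zc by blast
    qed
    have "generate G (carrier G) = carrier G"
      using generate_subgroup_incl[OF subset_refl subgroup_self] generate.incl[of _ "carrier G" G] by blast
    then show ?thesis unfolding U_grp_def U_rel_def un K_grp_def using True by simp
  next
    case False
    define Xs where "Xs = {char_ker G \<chi> | \<chi>. \<chi> \<in> Irr G \<and> group_center G \<subset> char_center G \<chi>}"
    have K: "K_grp G = carrier G \<inter> \<Inter>Xs" using False unfolding K_grp_def Xs_def by simp
    have Xn: "H \<lhd> G" if HX: "H \<in> Xs" for H
    proof -
      obtain \<chi> where chi: "\<chi> \<in> Irr G" and H: "H = char_ker G \<chi>" using HX unfolding Xs_def by blast
      obtain n \<rho> where irr: "irreducible_rep G n \<rho>" and chid: "\<chi> = chi_of G \<rho>" using Irr_E[OF chi] by blast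
      have rep: "is_rep G n \<rho>" using irr unfolding irreducible_rep_def by auto
      show ?thesis unfolding H chid ker_eq[OF grp fin irr] by (rule ker_normal[OF grp rep])
    qed
    have Kn: "K_grp G \<lhd> G" unfolding K by (rule normal_Inter_carrier[OF grp Xn])
    have Ksg: "subgroup (K_grp G) G" using Kn normal_imp_subgroup by blast
    have nzc: "\<chi> y \<noteq> 0" if chiI: "\<chi> \<in> Irr G" and yc: "y \<in> char_center G \<chi>" for \<chi> y
    proof -
      obtain n \<rho> where irr: "irreducible_rep G n \<rho>" and chid: "\<chi> = chi_of G \<rho>" using Irr_E[OF chiI] by blast
      have npos: "n > 0" using irr unfolding irreducible_rep_def by auto
      have "cmod (\<chi> y) = real n" using yc chi_one[OF grp irr] chid unfolding char_center_def by simp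
      then show ?thesis using npos by auto
    qed
    have ZsubZ: "group_center G \<subseteq> char_center G \<chi>" if chiI: "\<chi> \<in> Irr G" for \<chi>
    proof -
      obtain n \<rho> where irr: "irreducible_rep G n \<rho>" and chid: "\<chi> = chi_of G \<rho>" using Irr_E[OF chiI] by blast
      show ?thesis unfolding chid using center_in_char_center[OF grp fin irr] by blast
    qed
    show ?thesis
    proof (rule equalityI)
      have "\<Union>{H. H \<lhd> G \<and> V_rel G H \<subseteq> group_center G} \<subseteq> K_grp G"
      proof (rule subsetI)
        fix x assume "x \<in> \<Union>{H. H \<lhd> G \<and> V_rel G H \<subseteq> group_center G}"
        then obtain H where Hn: "H \<lhd> G" and HV: "V_rel G H \<subseteq> group_center G" and xH: "x \<in> H" by blast
        have xc: "x \<in> carrier G" using Hn xH normal_imp_subgroup subgroup.subset by blast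
        have "x \<in> Y" if YX: "Y \<in> Xs" for Y
        proof -
          obtain \<chi> where chi: "\<chi> \<in> Irr G" and Y: "Y = char_ker G \<chi>"
            and ss: "group_center G \<subset> char_center G \<chi>" using YX unfolding Xs_def by blast
          show ?thesis
          proof (rule ccontr)
            assume "x \<notin> Y"
            then have "\<chi> \<in> Irr_rel G H" unfolding Irr_rel_def using chi xH Y by blast
            then have "char_center G \<chi> \<subseteq> V_rel G H"
              unfolding V_rel_def using nzc[OF chi]
              by (auto intro!: generate.incl simp: char_center_def)
            then show False using HV ss by blast
          qed
        qed
        then show "x \<in> K_grp G" unfolding K using xc by blast
      qed
      then show "U_grp G \<subseteq> K_grp G" unfolding U_grp_def U_rel_def
        by (rule generate_subgroup_incl[OF _ Ksg])
    next
      have "V_rel G (K_grp G) \<subseteq> group_center G" unfolding V_rel_def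
      proof (rule generate_subgroup_incl[OF _ Zsg], rule subsetI)
        fix y assume "y \<in> {g \<in> carrier G. \<exists>\<chi>\<in>Irr_rel G (K_grp G). \<chi> g \<noteq> 0}"
        then obtain \<chi> where y: "y \<in> carrier G" and chi: "\<chi> \<in> Irr G" and nk: "\<not> K_grp G \<subseteq> char_ker G \<chi>"
          and nz: "\<chi> y \<noteq> 0" unfolding Irr_rel_def by blast
        have "\<not> group_center G \<subset> char_center G \<chi>"
        proof
          assume "group_center G \<subset> char_center G \<chi>"
          then have "char_ker G \<chi> \<in> Xs" unfolding Xs_def using chi by blast
          then show False using nk K by blast
        qed
        then have eq: "char_center G \<chi> = group_center G" using ZsubZ[OF chi] by blast
        have "y \<in> char_center G \<chi>" using gvz chi y nz unfolding GVZ_def by blast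
        then show "y \<in> group_center G" using eq by simp
      qed
      then have "K_grp G \<subseteq> \<Union>{H. H \<lhd> G \<and> V_rel G H \<subseteq> group_center G}" using Kn by blast
      then show "K_grp G \<subseteq> U_grp G" unfolding U_grp_def U_rel_def
        using generate.incl[of _ _ G] by blast
    qed
  qed
qed

theorem lemma6p14:
  fixes G :: "('a, 'b) monoid_scheme"
  assumes "group G" and "finite (carrier G)"
  shows "(GVZ G \<longrightarrow> U_grp G = K_grp G) \<and> (nilpotent_class2 G \<longrightarrow> U_grp G = K_grp G)"
  using gvz_main[OF assms] class2_GVZ[OF assms] by blast

end
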